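(* Let $n\ge2$, $f:\mathbb{R}^n\to\mathbb{R}^n$ continuously differentiable, $b_0\in\mathbb{R}^n_{\ge0}$, $\mu,\theta>0$, $r:=\mu/\theta$, and let $x^*\in\mathbb{R}^n_{\ge0}$, $u_*>0$ satisfy $x^*_n=r$ and $f(x^* )-u_*re_n+b_0=0$. Let $J:=\partial f/\partial x(x^* )$ with blocks $J_{12}:=S^TJe_n$, $J_{21}:=e_n^TJS$. Assume $J$ is Hurwitz stable and that $J_{12}=0$ or $J_{21}=0$. Then for all $\eta,k_p>0$ the equilibrium $\big(x^*,\ \mu/(\eta u_* ),\ u_*/k_p\big)$ of $\dot x=f(x)-k_px_nz_2e_n+b_0$, $\dot z_1=\mu-\eta k_pz_1z_2$, $\dot z_2=\theta x_n-\eta k_pz_1z_2$ is locally exponentially stable.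
   Context: $S:=[e_1\ \cdots\ e_{n-1}]$, $e_i$ standard basis vectors; $x_n=e_n^Tx$. Hurwitz stable: all eigenvalues have negative real part. An equilibrium is called locally exponentially stable here if the Jacobian matrix of the vector field at the equilibrium is Hurwitz stable. *)

theory Defs
  imports "HOL-Analysis.Analysis"
begin

text \<open>A complex number lam is an eigenvalue of the real linear map L iff it is an
eigenvalue of the complexification of L, i.e. there is a nonzero complex vector
w = u + i v with L w = lam w.\<close>
definition complex_eigenvalue :: "('a::real_vector \<Rightarrow> 'a) \<Rightarrow> complex \<Rightarrow> bool" where
  "complex_eigenvalue L lam \<longleftrightarrow>
     (\<exists>u v. (u \<noteq> 0 \<or> v \<noteq> 0) \<and>
            L u = Re lam *\<^sub>R u - Im lam *\<^sub>R v \<and>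
            L v = Im lam *\<^sub>R u + Re lam *\<^sub>R v)"

definition hurwitz :: "('a::real_vector \<Rightarrow> 'a) \<Rightarrow> bool" where
  "hurwitz L \<longleftrightarrow> (\<forall>lam. complex_eigenvalue L lam \<longrightarrow> Re lam < 0)"

definition loc_exp_stable :: "('a::real_normed_vector \<Rightarrow> 'a) \<Rightarrow> 'a \<Rightarrow> bool" where
  "loc_exp_stable F p \<longleftrightarrow> F p = 0 \<and> (\<exists>F'. (F has_derivative F') (at p) \<and> hurwitz F')"

end

theory Submission
  imports Defs
begin

lemma cubic_RH:
  fixes s :: complex and A B C :: real
  assumes "A > 0" "B > 0" "C > 0" "A * B > C" "Re s \<ge> 0"
    and "s * s * s + of_real A * s * s + of_real B * s + of_real C = 0"
  shows False
proof -
  define x where "x = Re s"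
  define y where "y = Im s"
  have re: "x*x*x - 3*x*y*y + A*(x*x - y*y) + B*x + C = 0"
    using arg_cong[OF assms(6), of Re] by (simp add: x_def y_def algebra_simps)
  have im: "y*(3*x*x - y*y + 2*A*x + B) = 0"
    using arg_cong[OF assms(6), of Im] by (simp add: x_def y_def algebra_simps)
  have x0: "x \<ge> 0" using assms(5) x_def by simp
  show False
  proof (cases "y = 0")
    case True
    with re have "x*x*x + A*x*x + B*x + C = 0" by (simp add: algebra_simps)
    moreover have "x*x*x + A*x*x + B*x \<ge> 0" using x0 assms by (simp add: add_nonneg_nonneg)
    ultimately show False using assms by linarith
  next
    case False
    with im have yy: "y*y = 3*x*x + 2*A*x + B" by simp
    have "-8*x*x*x - 8*A*x*x - (2*B + 2*A*A)*x - A*B + C = 0"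
    proof -
      have e1: "3*x*y*y = 3*x*(3*x*x + 2*A*x + B)" using yy by (metis mult.assoc)
      have e2: "A*(x*x - y*y) = A*(x*x - (3*x*x + 2*A*x + B))" using yy by simp
      show ?thesis using re e1 e2 by (simp add: algebra_simps)
    qed
    moreover have "8*x*x*x + 8*A*x*x + (2*B + 2*A*A)*x \<ge> 0"
      using x0 assms by (simp add: add_nonneg_nonneg)
    ultimately show False using assms by linarith
  qed
qed

lemma three:
  fixes s x z1 z2 :: complex and d c a P th :: real
  assumes pos: "d > 0" "c > 0" "a > 0" "P > 0" "th > 0" and rs: "Re s \<ge> 0"
    and e1: "(s + of_real d) * x = - of_real P * z2"
    and e2: "(s + of_real c) * z1 = - of_real a * z2"
    and e3: "(s + of_real a) * z2 = of_real th * x - of_real c * z1"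
  shows "x = 0 \<and> z1 = 0 \<and> z2 = 0"
proof -
  have nd: "s + of_real d \<noteq> 0" using rs pos by (auto simp: complex_eq_iff)
  have nc: "s + of_real c \<noteq> 0" using rs pos by (auto simp: complex_eq_iff)
  have f1: "s * (s + of_real a + of_real c) * z2 = of_real th * (s + of_real c) * x"
  proof -
    have "(s + of_real c) * ((s + of_real a) * z2) = (s + of_real c) * (of_real th * x - of_real c * z1)"
      using e3 by simp
    also have "\<dots> = of_real th * (s + of_real c) * x - of_real c * ((s + of_real c) * z1)"
      by (simp add: algebra_simps)
    also have "\<dots> = of_real th * (s + of_real c) * x + of_real c * of_real a * z2"
      using e2 by simp
    finally show ?thesis by (simp add: algebra_simps)
  qed
  have f2: "(s * s * s + of_real (a+c+d) * s * s + of_real (d*(a+c) + th*P) * s + of_real (th*P*c)) * z2 = 0"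
  proof -
    have "(s + of_real d) * (s * (s + of_real a + of_real c) * z2) = of_real th * (s + of_real c) * ((s + of_real d) * x)"
      using f1 by (simp add: algebra_simps)
    also have "\<dots> = - of_real th * (s + of_real c) * of_real P * z2" using e1 by simp
    finally have h: "(s + of_real d) * (s * (s + of_real a + of_real c) * z2) = - of_real th * (s + of_real c) * of_real P * z2" .
    have "(s + of_real d) * (s * (s + of_real a + of_real c) * z2) - (- of_real th * (s + of_real c) * of_real P * z2) = 0"
      using h by simp
    then show ?thesis by (simp add: algebra_simps)
  qed
  show ?thesis
  proof (cases "z2 = 0")
    case True
    then show ?thesis using e1 e2 nd nc by simp
  next
    case False
    with f2 have "s * s * s + of_real (a+c+d) * s * s + of_real (d*(a+c) + th*P) * s + of_real (th*P*c) = 0"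
      by simp
    moreover have "(a+c+d)*(d*(a+c) + th*P) > th*P*c"
    proof -
      have "(a+c+d)*(d*(a+c) + th*P) \<ge> (a+c+d)*(th*P)" using pos by (simp add: mult_left_mono)
      moreover have "(a+c+d)*(th*P) > c*(th*P)" using pos by (simp add: mult_strict_right_mono)
      ultimately show ?thesis by (simp add: algebra_simps)
    qed
    moreover have "d*(a+c) + th*P > 0" using pos by (simp add: add_pos_pos)
    ultimately have False using cubic_RH[of "a+c+d" "d*(a+c) + th*P" "th*P*c" s] pos rs by auto
    then show ?thesis ..
  qed
qed

lemma test_inj: fixes L :: "real^'n \<Rightarrow> real^'n" assumes "linear L" "inj L" shows "surj L"
  using linear_inj_imp_surj assms by blast

lemma deriv_test:
  fixes f :: "real^'n \<Rightarrow> real^'n" and J :: "real^'n \<Rightarrow> real^'n"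
  assumes "(f has_derivative J) (at xs)"
  shows "((\<lambda>(x :: real^'n, z1 :: real, z2 :: real).
                (f x - (kp * x $ l * z2) *\<^sub>R axis l 1 + b0,
                 mu - eta * kp * z1 * z2,
                 theta * x $ l - eta * kp * z1 * z2)) has_derivative
     (\<lambda>(x, y1, y2). (J x - (kp * (x$l * z2s + xs$l * y2)) *\<^sub>R axis l 1,
        -(eta*kp*(y1 * z2s + z1s * y2)), theta * x$l - eta*kp*(y1 * z2s + z1s * y2)))) (at (xs, z1s, z2s))"
proof -
  have e: "(\<lambda>(x :: real^'n, z1 :: real, z2 :: real).
                (f x - (kp * x $ l * z2) *\<^sub>R axis l 1 + b0,
                 mu - eta * kp * z1 * z2,
                 theta * x $ l - eta * kp * z1 * z2)) = (\<lambda>p. (f (fst p) - (kp * fst p $ l * snd (snd p)) *\<^sub>R axis l 1 + b0,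
                 mu - eta * kp * fst (snd p) * snd (snd p),
                 theta * fst p $ l - eta * kp * fst (snd p) * snd (snd p)))"
    by (auto simp: fun_eq_iff)
  have e2: "(\<lambda>(x, y1, y2). (J x - (kp * (x$l * z2s + xs$l * y2)) *\<^sub>R axis l 1,
        -(eta*kp*(y1 * z2s + z1s * y2)), theta * x$l - eta*kp*(y1 * z2s + z1s * y2))) =
     (\<lambda>p. (J (fst p) - (kp * (fst p$l * z2s + xs$l * snd (snd p))) *\<^sub>R axis l 1,
        -(eta*kp*(fst (snd p) * z2s + z1s * snd (snd p))), theta * fst p$l - eta*kp*(fst (snd p) * z2s + z1s * snd (snd p))))"
    by (auto simp: fun_eq_iff)
  have fd: "((\<lambda>p. f (fst p)) has_derivative (\<lambda>p. J (fst p))) (at (xs, z1s, z2s))"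
  proof -
    have h1: "(fst has_derivative fst) (at (xs, z1s, z2s))"
      by (rule bounded_linear_imp_has_derivative[OF bounded_linear_fst])
    have a2: "(f has_derivative J) (at (fst (xs, z1s, z2s)))" using assms by simp
    show ?thesis using has_derivative_compose[OF h1 a2] by simp
  qed
  have d1: "((\<lambda>p::(real^'n) \<times> real \<times> real. fst p $ l) has_derivative (\<lambda>p. fst p $ l)) (at (xs, z1s, z2s))"
    by (rule bounded_linear_imp_has_derivative, rule bounded_linear_compose[OF bounded_linear_vec_nth bounded_linear_fst])
  have d2: "((\<lambda>p::(real^'n) \<times> real \<times> real. fst (snd p)) has_derivative (\<lambda>p. fst (snd p))) (at (xs, z1s, z2s))"
    by (rule bounded_linear_imp_has_derivative, rule bounded_linear_compose[OF bounded_linear_fst bounded_linear_snd])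
  have d3: "((\<lambda>p::(real^'n) \<times> real \<times> real. snd (snd p)) has_derivative (\<lambda>p. snd (snd p))) (at (xs, z1s, z2s))"
    by (rule bounded_linear_imp_has_derivative, rule bounded_linear_compose[OF bounded_linear_snd bounded_linear_snd])
  show ?thesis unfolding e e2
    apply (rule has_derivative_eq_rhs)
     apply (rule fd d1 d2 d3 derivative_intros)+
    apply (auto simp: fun_eq_iff algebra_simps)
    done
qed

lemma lin_comp:
  fixes J :: "real^'n \<Rightarrow> real^'n"
  assumes "linear J"
  shows "(J x)$k = (\<Sum>i\<in>UNIV. x$i * (J (axis i 1))$k)"
  by (rule Cartesian_Space.linear_componentwise) (simp add: linear_matrix_vector_mul_eq assms)

theorem mainTheorem16:
  fixes f :: "real^'n \<Rightarrow> real^'n"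
    and f' :: "real^'n \<Rightarrow> ((real^'n) \<Rightarrow>\<^sub>L (real^'n))"
    and l :: 'n
    and b0 xs :: "real^'n"
    and mu theta us :: real
  assumes n2: "CARD('n) \<ge> 2"
    and f_deriv: "\<And>x. (f has_derivative blinfun_apply (f' x)) (at x)"
    and f'_cont: "continuous_on UNIV f'"
    and b0_nonneg: "\<forall>i. b0 $ i \<ge> 0"
    and mu_pos: "mu > 0" and theta_pos: "theta > 0"
    and xs_nonneg: "\<forall>i. xs $ i \<ge> 0"
    and us_pos: "us > 0"
    and xs_last: "xs $ l = mu / theta"
    and equil: "f xs - (us * (mu / theta)) *\<^sub>R axis l 1 + b0 = 0"
    and J_hurwitz: "hurwitz (blinfun_apply (f' xs))"
    and blocks: "(\<forall>i. i \<noteq> l \<longrightarrow> (blinfun_apply (f' xs) (axis l 1)) $ i = 0)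
               \<or> (\<forall>j. j \<noteq> l \<longrightarrow> (blinfun_apply (f' xs) (axis j 1)) $ l = 0)"
  shows "\<forall>eta kp. eta > 0 \<longrightarrow> kp > 0 \<longrightarrow>
           loc_exp_stable
             (\<lambda>(x :: real^'n, z1 :: real, z2 :: real).
                (f x - (kp * x $ l * z2) *\<^sub>R axis l 1 + b0,
                 mu - eta * kp * z1 * z2,
                 theta * x $ l - eta * kp * z1 * z2))
             (xs, mu / (eta * us), us / kp)"
proof (intro allI impI)
  fix eta kp :: real
  assume eta: "eta > 0" and kp: "kp > 0"
  define J where "J = blinfun_apply (f' xs)"
  have linJ: "linear J" unfolding J_def
    by (simp add: blinfun.bounded_linear_right bounded_linear.linear)
  define z1s where "z1s = mu / (eta * us)"
  define z2s where "z2s = us / kp"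
  define F' where "F' = (\<lambda>(x::real^'n, y1::real, y2::real). (J x - (kp * (x$l * z2s + xs$l * y2)) *\<^sub>R axis l 1,
        -(eta*kp*(y1 * z2s + z1s * y2)), theta * x$l - eta*kp*(y1 * z2s + z1s * y2)))"
  have der: "((\<lambda>(x :: real^'n, z1 :: real, z2 :: real).
                (f x - (kp * x $ l * z2) *\<^sub>R axis l 1 + b0,
                 mu - eta * kp * z1 * z2,
                 theta * x $ l - eta * kp * z1 * z2)) has_derivative F') (at (xs, z1s, z2s))"
    unfolding F'_def by (rule deriv_test) (use f_deriv J_def in simp)
  have eq: "(\<lambda>(x :: real^'n, z1 :: real, z2 :: real).
                (f x - (kp * x $ l * z2) *\<^sub>R axis l 1 + b0,
                 mu - eta * kp * z1 * z2,
                 theta * x $ l - eta * kp * z1 * z2)) (xs, z1s, z2s) = 0"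
  proof -
    have h1: "kp * mu * z2s / theta = us * mu / theta" using kp unfolding z2s_def by simp
    have h2: "eta * kp * z1s * z2s = mu" using kp eta us_pos unfolding z1s_def z2s_def by simp
    show ?thesis using equil xs_last theta_pos by (simp add: h1 h2 zero_prod_def)
  qed
  have hur: "hurwitz F'"
    unfolding hurwitz_def complex_eigenvalue_def
  proof (intro allI impI)
    fix lam :: complex
    assume "\<exists>u v. (u \<noteq> 0 \<or> v \<noteq> 0) \<and>
            F' u = Re lam *\<^sub>R u - Im lam *\<^sub>R v \<and>
            F' v = Im lam *\<^sub>R u + Re lam *\<^sub>R v"
    then obtain u v where nz: "u \<noteq> 0 \<or> v \<noteq> 0" and Eu: "F' u = Re lam *\<^sub>R u - Im lam *\<^sub>R v"
      and Ev: "F' v = Im lam *\<^sub>R u + Re lam *\<^sub>R v" by blast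
    obtain ux u1 u2 where u: "u = (ux, u1, u2)" by (cases u) auto
    obtain vx v1 v2 where v: "v = (vx, v1, v2)" by (cases v) auto
    define sg where "sg = Re lam"
    define om where "om = Im lam"
    define c where "c = eta * us"
    define a where "a = kp * mu / us"
    define P where "P = kp * mu / theta"
    have cpos: "c > 0" and apos: "a > 0" and Ppos: "P > 0"
      using eta kp us_pos mu_pos theta_pos by (simp_all add: c_def a_def P_def)
    have kz: "kp * z2s = us" using kp by (simp add: z2s_def)
    have ez2: "eta * kp * z2s = c" using kp by (simp add: z2s_def c_def)
    have ez1: "eta * kp * z1s = a" using eta us_pos by (simp add: z1s_def a_def)
    have kxl: "kp * xs $ l = P" using xs_last by (simp add: P_def)
    have Ux: "J ux - (kp * (ux$l * z2s + xs$l * u2)) *\<^sub>R axis l 1 = sg *\<^sub>R ux - om *\<^sub>R vx"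
      and U1: "-(eta*kp*(u1 * z2s + z1s * u2)) = sg * u1 - om * v1"
      and U2: "theta * ux$l - eta*kp*(u1 * z2s + z1s * u2) = sg * u2 - om * v2"
      using Eu unfolding u v F'_def sg_def om_def by simp_all
    have Vx: "J vx - (kp * (vx$l * z2s + xs$l * v2)) *\<^sub>R axis l 1 = om *\<^sub>R ux + sg *\<^sub>R vx"
      and V1: "-(eta*kp*(v1 * z2s + z1s * v2)) = om * u1 + sg * v1"
      and V2: "theta * vx$l - eta*kp*(v1 * z2s + z1s * v2) = om * u2 + sg * v2"
      using Ev unfolding u v F'_def sg_def om_def by simp_all
    have Uxl: "(J ux)$l - us * ux$l - P * u2 = sg * ux$l - om * vx$l"
      using arg_cong[OF Ux, of "\<lambda>w. w $ l"] by (simp add: kz[symmetric] kxl[symmetric] algebra_simps)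
    have Vxl: "(J vx)$l - us * vx$l - P * v2 = om * ux$l + sg * vx$l"
      using arg_cong[OF Vx, of "\<lambda>w. w $ l"] by (simp add: kz[symmetric] kxl[symmetric] algebra_simps)
    have Uxi: "(J ux)$i = sg * ux$i - om * vx$i" if "i \<noteq> l" for i
      using arg_cong[OF Ux, of "\<lambda>w. w $ i"] that by (simp add: axis_def)
    have Vxi: "(J vx)$i = om * ux$i + sg * vx$i" if "i \<noteq> l" for i
      using arg_cong[OF Vx, of "\<lambda>w. w $ i"] that by (simp add: axis_def)
    have U1': "-(c * u1 + a * u2) = sg * u1 - om * v1"
      using U1 by (simp add: ez1[symmetric] ez2[symmetric] algebra_simps)
    have V1': "-(c * v1 + a * v2) = om * u1 + sg * v1"
      using V1 by (simp add: ez1[symmetric] ez2[symmetric] algebra_simps)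
    have U2': "theta * ux$l - (c * u1 + a * u2) = sg * u2 - om * v2"
      using U2 by (simp add: ez1[symmetric] ez2[symmetric] algebra_simps)
    have V2': "theta * vx$l - (c * v1 + a * v2) = om * u2 + sg * v2"
      using V2 by (simp add: ez1[symmetric] ez2[symmetric] algebra_simps)
    show "Re lam < 0"
    proof (rule ccontr)
      assume "\<not> Re lam < 0"
      hence rs: "Re lam \<ge> 0" by simp
      have hJ: "hurwitz J" using J_hurwitz J_def by simp
      have ax0: "axis l (1::real) \<noteq> 0" by (auto simp: vec_eq_iff axis_def)
      define jj where "jj = (J (axis l 1))$l"
      have K: "ux$l = 0 \<and> vx$l = 0 \<and> u1 = 0 \<and> v1 = 0 \<and> u2 = 0 \<and> v2 = 0"
        if jn: "jj < 0" and jl: "(J ux)$l = jj * ux$l" "(J vx)$l = jj * vx$l"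
      proof -
        have "Complex (ux$l) (vx$l) = 0 \<and> Complex u1 v1 = 0 \<and> Complex u2 v2 = 0"
        proof (rule three[of "us - jj" c a P theta lam])
          show "us - jj > 0" using jn us_pos by simp
          show "(lam + of_real (us - jj)) * Complex (ux$l) (vx$l) = - of_real P * Complex u2 v2"
            using Uxl Vxl jl by (simp add: complex_eq_iff sg_def[symmetric] om_def[symmetric] algebra_simps)
          show "(lam + of_real c) * Complex u1 v1 = - of_real a * Complex u2 v2"
            using U1' V1' by (simp add: complex_eq_iff sg_def[symmetric] om_def[symmetric] algebra_simps)
          show "(lam + of_real a) * Complex u2 v2 = of_real theta * Complex (ux$l) (vx$l) - of_real c * Complex u1 v1"
            using U2' V2' by (simp add: complex_eq_iff sg_def[symmetric] om_def[symmetric] algebra_simps)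
        qed (use cpos apos Ppos theta_pos rs in auto)
        then show ?thesis by (simp add: complex_eq_iff)
      qed
      from blocks show False
      proof
        assume B1: "\<forall>i. i \<noteq> l \<longrightarrow> (blinfun_apply (f' xs) (axis l 1)) $ i = 0"
        have Jel: "J (axis l 1) = jj *\<^sub>R axis l 1"
          using B1 by (auto simp: vec_eq_iff J_def jj_def axis_def)
        have "complex_eigenvalue J (of_real jj)"
          unfolding complex_eigenvalue_def
          by (rule exI[of _ "axis l 1"], rule exI[of _ 0]) (use Jel linear_0[OF linJ] ax0 in simp)
        hence jneg: "jj < 0" using hJ by (auto simp: hurwitz_def)
        define Yu where "Yu = ux - ux$l *\<^sub>R axis l 1"
        define Yv where "Yv = vx - vx$l *\<^sub>R axis l 1"
        have JYu: "J Yu = J ux - (ux$l * jj) *\<^sub>R axis l 1"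
          unfolding Yu_def by (simp add: linear_diff[OF linJ] linear_scale[OF linJ] Jel)
        have JYv: "J Yv = J vx - (vx$l * jj) *\<^sub>R axis l 1"
          unfolding Yv_def by (simp add: linear_diff[OF linJ] linear_scale[OF linJ] Jel)
        show False
        proof (cases "Yu = 0 \<and> Yv = 0")
          case True
          then have uxe: "ux = ux$l *\<^sub>R axis l 1" and vxe: "vx = vx$l *\<^sub>R axis l 1"
            by (simp_all add: Yu_def Yv_def)
          have "(J ux)$l = jj * ux$l"
            by (subst uxe) (simp add: linear_scale[OF linJ] Jel)
          moreover have "(J vx)$l = jj * vx$l"
            by (subst vxe) (simp add: linear_scale[OF linJ] Jel)
          ultimately have z: "ux$l = 0 \<and> vx$l = 0 \<and> u1 = 0 \<and> v1 = 0 \<and> u2 = 0 \<and> v2 = 0"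
            using K jneg by blast
          then have "ux = 0" "vx = 0" using uxe vxe by simp_all
          then show False using nz z u v by (simp add: zero_prod_def)
        next
          case False
          have nj: "lam - of_real jj \<noteq> 0" using rs jneg by (auto simp: complex_eq_iff)
          define g where "g = Complex ((J Yu)$l) ((J Yv)$l)"
          define t where "t = g / (lam - of_real jj)"
          have tg: "t * (lam - of_real jj) = g" using nj by (simp add: t_def)
          have tr: "Re t * sg - Im t * om - jj * Re t = (J Yu)$l"
            using arg_cong[OF tg, of Re] by (simp add: g_def sg_def om_def algebra_simps)
          have ti: "Re t * om + Im t * sg - jj * Im t = (J Yv)$l"
            using arg_cong[OF tg, of Im] by (simp add: g_def sg_def om_def algebra_simps)
          define Wu where "Wu = Yu + Re t *\<^sub>R axis l 1"
          define Wv where "Wv = Yv + Im t *\<^sub>R axis l 1"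
          have JWu: "J Wu = J Yu + (Re t * jj) *\<^sub>R axis l 1"
            unfolding Wu_def by (simp add: linear_add[OF linJ] linear_scale[OF linJ] Jel)
          have JWv: "J Wv = J Yv + (Im t * jj) *\<^sub>R axis l 1"
            unfolding Wv_def by (simp add: linear_add[OF linJ] linear_scale[OF linJ] Jel)
          have Wul: "Wu$l = Re t" and Wvl: "Wv$l = Im t"
            by (simp_all add: Wu_def Wv_def Yu_def Yv_def)
          have "complex_eigenvalue J lam"
            unfolding complex_eigenvalue_def
          proof (intro exI conjI)
            show "Wu \<noteq> 0 \<or> Wv \<noteq> 0"
            proof -
              from False obtain i where "Yu$i \<noteq> 0 \<or> Yv$i \<noteq> 0" by (auto simp: vec_eq_iff)
              moreover have "i \<noteq> l" using calculation by (auto simp: Yu_def Yv_def)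
              ultimately show ?thesis by (auto simp: vec_eq_iff Wu_def Wv_def axis_def)
            qed
            show "J Wu = Re lam *\<^sub>R Wu - Im lam *\<^sub>R Wv"
            proof (subst vec_eq_iff, intro allI)
              fix i
              show "J Wu $ i = (Re lam *\<^sub>R Wu - Im lam *\<^sub>R Wv) $ i"
              proof (cases "i = l")
                case True
                then show ?thesis using tr
                  by (simp add: JWu Wul Wvl sg_def[symmetric] om_def[symmetric] algebra_simps)
              next
                case False
                have a1: "(J Wu)$i = (J ux)$i" using False by (simp add: JWu JYu axis_def)
                have a2: "Wu$i = ux$i" "Wv$i = vx$i" using False by (simp_all add: Wu_def Wv_def Yu_def Yv_def axis_def)
                show ?thesis using Uxi[OF False] by (simp add: a1 a2 sg_def om_def)
              qed
            qed
            show "J Wv = Im lam *\<^sub>R Wu + Re lam *\<^sub>R Wv"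
            proof (subst vec_eq_iff, intro allI)
              fix i
              show "J Wv $ i = (Im lam *\<^sub>R Wu + Re lam *\<^sub>R Wv) $ i"
              proof (cases "i = l")
                case True
                then show ?thesis using ti
                  by (simp add: JWv Wul Wvl sg_def[symmetric] om_def[symmetric] algebra_simps)
              next
                case False
                have a1: "(J Wv)$i = (J vx)$i" using False by (simp add: JWv JYv axis_def)
                have a2: "Wu$i = ux$i" "Wv$i = vx$i" using False by (simp_all add: Wu_def Wv_def Yu_def Yv_def axis_def)
                show ?thesis using Vxi[OF False] by (simp add: a1 a2 sg_def om_def)
              qed
            qed
          qed
          then show False using hJ rs by (auto simp: hurwitz_def)
        qed
      next
        assume B2: "\<forall>j. j \<noteq> l \<longrightarrow> (blinfun_apply (f' xs) (axis j 1)) $ l = 0"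
        have Jl: "(J x)$l = jj * x$l" for x
        proof -
          have "(\<Sum>i\<in>UNIV. x$i * J (axis i 1) $ l) = (\<Sum>i\<in>UNIV. if i = l then x$l * jj else 0)"
            by (rule sum.cong) (auto simp: J_def jj_def B2)
          then show ?thesis using lin_comp[OF linJ, of x l] by simp
        qed
        define L where "L = (\<lambda>x. J x - jj *\<^sub>R x)"
        have linL: "linear L" unfolding L_def
          by (rule linearI) (simp_all add: linear_add[OF linJ] linear_scale[OF linJ] algebra_simps)
        have "\<not> surj L"
        proof
          assume "surj L"
          then obtain x where "L x = axis l 1" by (metis surjD)
          then have "(L x)$l = 1" by simp
          moreover have "(L x)$l = 0" by (simp add: L_def Jl)
          ultimately show False by simp
        qed
        then have "\<not> inj L" using linear_inj_imp_surj linL by blast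
        then obtain p q where pq: "p \<noteq> q" "L p = L q" by (auto simp: inj_def)
        have JX: "J (p - q) = jj *\<^sub>R (p - q)"
          using pq(2) by (simp add: L_def linear_diff[OF linJ] algebra_simps)
        have "complex_eigenvalue J (of_real jj)"
          unfolding complex_eigenvalue_def
          by (rule exI[of _ "p - q"], rule exI[of _ 0]) (use JX linear_0[OF linJ] pq(1) in simp)
        hence jneg: "jj < 0" using hJ by (auto simp: hurwitz_def)
        have z: "ux$l = 0 \<and> vx$l = 0 \<and> u1 = 0 \<and> v1 = 0 \<and> u2 = 0 \<and> v2 = 0"
          using K jneg Jl by blast
        have "complex_eigenvalue J lam"
          unfolding complex_eigenvalue_def
        proof (intro exI conjI)
          show "ux \<noteq> 0 \<or> vx \<noteq> 0" using nz z u v by (auto simp: zero_prod_def)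
          show "J ux = Re lam *\<^sub>R ux - Im lam *\<^sub>R vx"
            unfolding vec_eq_iff
          proof
            fix i show "J ux $ i = (Re lam *\<^sub>R ux - Im lam *\<^sub>R vx) $ i"
              using Uxi[of i] z Jl[of ux] by (cases "i = l") (auto simp: sg_def om_def)
          qed
          show "J vx = Im lam *\<^sub>R ux + Re lam *\<^sub>R vx"
            unfolding vec_eq_iff
          proof
            fix i show "J vx $ i = (Im lam *\<^sub>R ux + Re lam *\<^sub>R vx) $ i"
              using Vxi[of i] z Jl[of vx] by (cases "i = l") (auto simp: sg_def om_def)
          qed
        qed
        then show False using hJ rs by (auto simp: hurwitz_def)
      qed
    qed
  qed
  show "loc_exp_stable
             (\<lambda>(x :: real^'n, z1 :: real, z2 :: real).
                (f x - (kp * x $ l * z2) *\<^sub>R axis l 1 + b0,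
                 mu - eta * kp * z1 * z2,
                 theta * x $ l - eta * kp * z1 * z2))
             (xs, mu / (eta * us), us / kp)"
    unfolding loc_exp_stable_def using eq der hur unfolding z1s_def z2s_def by blast
qed

end
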